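(* Let $\mathcal{R}^{rsc}$ be a rich single-crossing domain and $U\subseteq\mathcal{R}^{rsc}$. If $R_0=\inf_{\prec}U$ exists in $\mathcal{R}^{rsc}$, then $R_0$ belongs to the closure of $U$ in the order topology; likewise, if $R^0=\sup_{\prec}U$ exists, then $R^0$ belongs to the closure of $U$.
   Context: $\mathbb{Z}=[0,\infty)\times[0,1]$. Classical preferences, the single-crossing property, rich single-crossing domains $\mathcal{R}^{rsc}$ and the relation $\prec$ are as follows. A classical preference is a complete transitive relation $R$ on $\mathbb{Z}$ (strict part $P$, indifference $I$) that is strictly decreasing in $t$ for every fixed $q$, strictly increasing in $q$ for every fixed $t$, and has closed upper and lower contour sets. Two distinct classical preferences satisfy single-crossing if any indifference set of one meets any indifference set of the other in at most one point. $\mathcal{R}^{rsc}$ is a set of classical preferences, pairwise single-crossing, such that for all $(t',q'),(t'',q'')$ with $t'<t''$, $q'<q''$ some member is indifferent between them. For distinct $R',R''$, $R'\prec R''$ means that for every $z\in\mathbb{Z}$, $\square(z)\cap\{x:xR''z\}\subseteq\square(z)\cap\{x:xR'z\}$, where $\square(z)=\{x: x=z\text{ or } x<z\}$ and $(t',q')<(t'',q'')$ means $t'<t''$ and $q'<q''$. $\prec$ is a linear order on $\mathcal{R}^{rsc}$; $\inf_\prec,\sup_\prec$ are taken w.r.t. it, and $\mathcal{R}^{rsc}$ carries the order topology. *)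

theory Defs
  imports "HOL-Analysis.Analysis"
begin

type_synonym zbundle = "real \<times> real"
type_synonym pref = "(zbundle \<times> zbundle) set"
  \<comment> \<open>(x, y) \<in> R means x R y, i.e. x is weakly preferred to y\<close>

definition Zset :: "zbundle set" where
  "Zset = {(t, q). 0 \<le> t \<and> 0 \<le> q \<and> q \<le> 1}"

definition indiff :: "pref \<Rightarrow> zbundle \<Rightarrow> zbundle \<Rightarrow> bool" where
  "indiff R x y \<longleftrightarrow> (x, y) \<in> R \<and> (y, x) \<in> R"

definition strict :: "pref \<Rightarrow> zbundle \<Rightarrow> zbundle \<Rightarrow> bool" where
  "strict R x y \<longleftrightarrow> (x, y) \<in> R \<and> (y, x) \<notin> R"

definition classical :: "pref \<Rightarrow> bool" where
  "classical R \<longleftrightarrow>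
     R \<subseteq> Zset \<times> Zset \<and>
     (\<forall>x\<in>Zset. \<forall>y\<in>Zset. (x, y) \<in> R \<or> (y, x) \<in> R) \<and>
     (\<forall>x\<in>Zset. \<forall>y\<in>Zset. \<forall>z\<in>Zset. (x, y) \<in> R \<longrightarrow> (y, z) \<in> R \<longrightarrow> (x, z) \<in> R) \<and>
     (\<forall>t t' q. (t, q) \<in> Zset \<longrightarrow> (t', q) \<in> Zset \<longrightarrow> t < t' \<longrightarrow> strict R (t, q) (t', q)) \<and>
     (\<forall>t q q'. (t, q) \<in> Zset \<longrightarrow> (t, q') \<in> Zset \<longrightarrow> q < q' \<longrightarrow> strict R (t, q') (t, q)) \<and>
     (\<forall>z\<in>Zset. closed {x \<in> Zset. (x, z) \<in> R} \<and> closed {x \<in> Zset. (z, x) \<in> R})"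

definition indiff_set :: "pref \<Rightarrow> zbundle \<Rightarrow> zbundle set" where
  "indiff_set R z = {x \<in> Zset. indiff R x z}"

definition single_crossing :: "pref \<Rightarrow> pref \<Rightarrow> bool" where
  "single_crossing R1 R2 \<longleftrightarrow>
     (\<forall>z1\<in>Zset. \<forall>z2\<in>Zset. \<forall>a b. a \<in> indiff_set R1 z1 \<inter> indiff_set R2 z2 \<longrightarrow>
                               b \<in> indiff_set R1 z1 \<inter> indiff_set R2 z2 \<longrightarrow> a = b)"

definition rich_single_crossing :: "pref set \<Rightarrow> bool" where
  "rich_single_crossing D \<longleftrightarrow>
     (\<forall>R\<in>D. classical R) \<and>
     (\<forall>R1\<in>D. \<forall>R2\<in>D. R1 \<noteq> R2 \<longrightarrow> single_crossing R1 R2) \<and>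
     (\<forall>t1 q1 t2 q2. (t1, q1) \<in> Zset \<longrightarrow> (t2, q2) \<in> Zset \<longrightarrow> t1 < t2 \<longrightarrow> q1 < q2 \<longrightarrow>
        (\<exists>R\<in>D. indiff R (t1, q1) (t2, q2)))"

definition lessZ :: "zbundle \<Rightarrow> zbundle \<Rightarrow> bool" where
  "lessZ x y \<longleftrightarrow> fst x < fst y \<and> snd x < snd y"

definition box :: "zbundle \<Rightarrow> zbundle set" where
  "box z = {x \<in> Zset. x = z \<or> lessZ x z}"

definition prec :: "pref \<Rightarrow> pref \<Rightarrow> bool" where
  "prec R1 R2 \<longleftrightarrow> R1 \<noteq> R2 \<and>
     (\<forall>z\<in>Zset. box z \<inter> {x. (x, z) \<in> R2} \<subseteq> box z \<inter> {x. (x, z) \<in> R1})"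

definition is_inf_prec :: "pref set \<Rightarrow> pref set \<Rightarrow> pref \<Rightarrow> bool" where
  "is_inf_prec D U R0 \<longleftrightarrow> R0 \<in> D \<and> (\<forall>R\<in>U. R0 = R \<or> prec R0 R) \<and>
     (\<forall>L\<in>D. (\<forall>R\<in>U. L = R \<or> prec L R) \<longrightarrow> L = R0 \<or> prec L R0)"

definition is_sup_prec :: "pref set \<Rightarrow> pref set \<Rightarrow> pref \<Rightarrow> bool" where
  "is_sup_prec D U R0 \<longleftrightarrow> R0 \<in> D \<and> (\<forall>R\<in>U. R = R0 \<or> prec R R0) \<and>
     (\<forall>M\<in>D. (\<forall>R\<in>U. R = M \<or> prec R M) \<longrightarrow> R0 = M \<or> prec R0 M)"

definition order_top :: "pref set \<Rightarrow> pref topology" where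
  "order_top D = topology_generated_by
     (insert D ({{R \<in> D. prec R A} | A. A \<in> D} \<union> {{R \<in> D. prec A R} | A. A \<in> D}))"

end

theory Submission
  imports Defs
begin


lemma cl_sub: "classical R \<Longrightarrow> (x,y) \<in> R \<Longrightarrow> x \<in> Zset \<and> y \<in> Zset"
  unfolding classical_def by auto
lemma cl_total: "classical R \<Longrightarrow> x \<in> Zset \<Longrightarrow> y \<in> Zset \<Longrightarrow> (x,y) \<in> R \<or> (y,x) \<in> R"
  unfolding classical_def by blast
lemma cl_trans: "classical R \<Longrightarrow> (x,y) \<in> R \<Longrightarrow> (y,z) \<in> R \<Longrightarrow> (x,z) \<in> R"
proof -
  assume c: "classical R" and a: "(x,y) \<in> R" "(y,z) \<in> R"
  have "x \<in> Zset" "y \<in> Zset" "z \<in> Zset" using cl_sub[OF c a(1)] cl_sub[OF c a(2)] by auto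
  then show ?thesis using c a unfolding classical_def by blast
qed
lemma cl_refl: "classical R \<Longrightarrow> x \<in> Zset \<Longrightarrow> (x,x) \<in> R"
  using cl_total by blast
lemma cl_tmono: "classical R \<Longrightarrow> (t,q) \<in> Zset \<Longrightarrow> (t',q) \<in> Zset \<Longrightarrow> t < t' \<Longrightarrow> strict R (t,q) (t',q)"
  unfolding classical_def by blast
lemma cl_qmono: "classical R \<Longrightarrow> (t,q) \<in> Zset \<Longrightarrow> (t,q') \<in> Zset \<Longrightarrow> q < q' \<Longrightarrow> strict R (t,q') (t,q)"
  unfolding classical_def by blast
lemma cl_closed_up: "classical R \<Longrightarrow> z \<in> Zset \<Longrightarrow> closed {x \<in> Zset. (x, z) \<in> R}"
  unfolding classical_def by blast
lemma cl_closed_lo: "classical R \<Longrightarrow> z \<in> Zset \<Longrightarrow> closed {x \<in> Zset. (z, x) \<in> R}"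
  unfolding classical_def by blast

lemma Zset_iff[simp]: "(t,q) \<in> Zset \<longleftrightarrow> 0 \<le> t \<and> 0 \<le> q \<and> q \<le> 1"
  unfolding Zset_def by auto

lemma cl_mono2:
  assumes c: "classical R" and "(t,q) \<in> Zset" "(t',q') \<in> Zset" "t \<le> t'" "q' \<le> q" "(t,q) \<noteq> (t',q')"
  shows "strict R (t,q) (t',q')"
proof -
  have m: "(t,q') \<in> Zset" using assms by auto
  have a: "(t,q) = (t,q') \<or> strict R (t,q) (t,q')" using cl_qmono[OF c m assms(2)] assms by force
  have b: "(t,q') = (t',q') \<or> strict R (t,q') (t',q')" using cl_tmono[OF c m assms(3)] assms by force
  show ?thesis using a b assms cl_trans[OF c] unfolding strict_def by metis
qed

lemma strict_trans1: "classical R \<Longrightarrow> strict R x y \<Longrightarrow> (y,z) \<in> R \<Longrightarrow> strict R x z"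
  unfolding strict_def by (meson cl_trans)
lemma strict_trans2: "classical R \<Longrightarrow> (x,y) \<in> R \<Longrightarrow> strict R y z \<Longrightarrow> strict R x z"
  unfolding strict_def by (meson cl_trans)
lemma not_R_strict: "classical R \<Longrightarrow> x \<in> Zset \<Longrightarrow> y \<in> Zset \<Longrightarrow> (x,y) \<notin> R \<Longrightarrow> strict R y x"
  unfolding strict_def using cl_total by blast

lemma open_above:
  assumes c: "classical R" and z: "z \<in> Zset" and s: "strict R p z"
  shows "\<exists>e>0. \<forall>y\<in>Zset. dist y p < e \<longrightarrow> strict R y z"
proof -
  have "open (- {x \<in> Zset. (z, x) \<in> R})" using cl_closed_lo[OF c z] by auto
  moreover have "p \<in> - {x \<in> Zset. (z, x) \<in> R}" using s unfolding strict_def by auto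
  ultimately obtain e where e: "e > 0" "ball p e \<subseteq> - {x \<in> Zset. (z, x) \<in> R}"
    using open_contains_ball by blast
  show ?thesis
  proof (intro exI[of _ e] conjI ballI impI)
    fix y assume "y \<in> Zset" "dist y p < e"
    then have "(z,y) \<notin> R" using e by (auto simp: dist_commute)
    then show "strict R y z" using not_R_strict[OF c z \<open>y \<in> Zset\<close>] by auto
  qed (use e in auto)
qed

lemma open_below:
  assumes c: "classical R" and z: "z \<in> Zset" and s: "strict R z p"
  shows "\<exists>e>0. \<forall>y\<in>Zset. dist y p < e \<longrightarrow> strict R z y"
proof -
  have "open (- {x \<in> Zset. (x, z) \<in> R})" using cl_closed_up[OF c z] by auto
  moreover have "p \<in> - {x \<in> Zset. (x, z) \<in> R}" using s unfolding strict_def by auto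
  ultimately obtain e where e: "e > 0" "ball p e \<subseteq> - {x \<in> Zset. (x, z) \<in> R}"
    using open_contains_ball by blast
  show ?thesis
  proof (intro exI[of _ e] conjI ballI impI)
    fix y assume "y \<in> Zset" "dist y p < e"
    then have "(y,z) \<notin> R" using e by (auto simp: dist_commute)
    then show "strict R z y" using not_R_strict[OF c \<open>y \<in> Zset\<close> z] by auto
  qed (use e in auto)
qed

lemma dist_row: "dist (a::real, b::real) (a, c) = dist b c"
  by (simp add: dist_Pair_Pair)
lemma dist_col: "dist (a::real, b::real) (c, b) = dist a c"
  by (simp add: dist_Pair_Pair)




lemma cl_weak: assumes c: "classical R" and "(t,q) \<in> Zset" "(t',q') \<in> Zset" "t \<le> t'" "q' \<le> q"
  shows "((t,q),(t',q')) \<in> R"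
  using cl_mono2[OF assms] cl_refl[OF c] assms(2) unfolding strict_def by (cases "(t,q) = (t',q')") auto

lemma threshold:
  assumes c: "classical R" and z: "z \<in> Zset" and fz: "0 < fst z" and q: "0 \<le> q" "q < snd z"
    and s0: "strict R (0,q) z"
  shows "\<exists>th. 0 < th \<and> th < fst z \<and> indiff R (th,q) z"
proof -
  have q1: "q \<le> 1" using z q by (cases z) auto
  define S where "S = {s. 0 \<le> s \<and> s \<le> fst z \<and> ((s,q),z) \<in> R}"
  have Seq: "S = (\<lambda>s. (s,q)) -` {x \<in> Zset. (x, z) \<in> R} \<inter> {0..fst z}"
    unfolding S_def using q q1 by auto
  have cS: "closed S" unfolding Seq
    by (intro closed_Int closed_vimage cl_closed_up[OF c z] continuous_intros)
  have S0: "0 \<in> S" unfolding S_def using s0 fz unfolding strict_def by auto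
  have bS: "bdd_above S" unfolding S_def by (auto intro: bdd_aboveI[of _ "fst z"])
  define th where "th = Sup S"
  have thS: "th \<in> S" unfolding th_def using closed_contains_Sup[OF _ bS cS] S0 by auto
  have ub: "\<And>s. s \<in> S \<Longrightarrow> s \<le> th" unfolding th_def using bS by (simp add: cSup_upper)
  have zz: "z = (fst z, snd z)" by simp
  have "strict R z (fst z, q)" using cl_qmono[OF c, of "fst z" q "snd z"] z q q1 fz
    by (metis Zset_iff less_eq_real_def prod.collapse)
  then have "fst z \<notin> S" unfolding S_def strict_def by auto
  then have lt: "th < fst z" using thS unfolding S_def by force
  obtain e where e: "e > 0" "\<forall>y\<in>Zset. dist y (0,q) < e \<longrightarrow> strict R y z"
    using open_above[OF c z s0] by blast
  define s where "s = min (e/2) (fst z)"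
  have "s \<in> S" unfolding S_def s_def using e fz q q1
    by (auto simp: dist_col strict_def)
  then have pos: "0 < th" using ub[of s] e fz unfolding s_def by auto
  have Rth: "((th,q),z) \<in> R" using thS unfolding S_def by auto
  have "(z,(th,q)) \<in> R"
  proof (rule ccontr)
    assume "(z,(th,q)) \<notin> R"
    then have st: "strict R (th,q) z" using Rth unfolding strict_def by auto
    obtain e where e: "e > 0" "\<forall>y\<in>Zset. dist y (th,q) < e \<longrightarrow> strict R y z"
      using open_above[OF c z st] by blast
    define s where "s = th + min (e/2) (fst z - th)"
    have m: "min (e/2) (fst z - th) > 0" "min (e/2) (fst z - th) \<le> e/2" "min (e/2) (fst z - th) \<le> fst z - th"
      using e lt by (auto simp: min_def)
    have sZ: "(s,q) \<in> Zset" using m pos q q1 unfolding s_def by auto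
    have "dist (s,q) (th,q) < e" unfolding dist_col s_def dist_real_def using m e by auto
    then have "((s,q),z) \<in> R" using e sZ unfolding strict_def by auto
    then have "s \<in> S" unfolding S_def s_def using m pos by auto
    then show False using ub[of s] e lt unfolding s_def by auto
  qed
  then show ?thesis using pos lt Rth unfolding indiff_def by auto
qed

definition rowT :: "pref \<Rightarrow> pref \<Rightarrow> zbundle \<Rightarrow> real \<Rightarrow> bool" where
  "rowT R S z q \<longleftrightarrow> (\<exists>t. 0 \<le> t \<and> t < fst z \<and> strict R (t,q) z \<and> strict S z (t,q))"

definition Tp :: "pref \<Rightarrow> pref \<Rightarrow> zbundle \<Rightarrow> bool" where
  "Tp R S z \<longleftrightarrow> (\<exists>x\<in>Zset. lessZ x z \<and> strict R x z \<and> strict S z x)"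

lemma row1:
  assumes c: "classical R" "classical S"
    and NC: "\<forall>y\<in>Zset. indiff R y z \<and> indiff S y z \<longrightarrow> y = z"
    and z: "z \<in> Zset" and fz: "0 < fst z" and q: "0 \<le> q" "q < snd z"
    and s0: "strict R (0,q) z"
  shows "rowT R S z q \<or> rowT S R z q"
proof -
  have q1: "q \<le> 1" using z q by (cases z) auto
  obtain th where th: "0 < th" "th < fst z" "indiff R (th,q) z" using threshold[OF c(1) z fz q s0] by blast
  define y where "y = (th,q)"
  have yZ: "y \<in> Zset" unfolding y_def using th q q1 by auto
  have "y \<noteq> z" unfolding y_def using th by auto
  then have ni: "\<not> indiff S y z" using NC yZ th unfolding y_def by auto
  show ?thesis
  proof (cases "(y,z) \<in> S")
    case True
    then have st: "strict S y z" using ni unfolding indiff_def strict_def by auto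
    obtain e where e: "e > 0" "\<forall>w\<in>Zset. dist w y < e \<longrightarrow> strict S w z"
      using open_above[OF c(2) z st] by blast
    define t where "t = th + min (e/2) ((fst z - th)/2)"
    have t: "th < t" "t < fst z" unfolding t_def using e th(1,2) by (auto simp: min_def field_simps)
    have tZ: "(t,q) \<in> Zset" using t th q q1 by auto
    have "dist (t,q) y < e" unfolding y_def dist_col dist_real_def t_def using e th(1,2) by (auto simp: min_def abs_if)
    then have "strict S (t,q) z" using e tZ by auto
    moreover have "strict R z (t,q)"
      using strict_trans2[OF c(1) _ cl_tmono[OF c(1) _ tZ t(1)]] th q q1 unfolding indiff_def by auto
    ultimately have "rowT S R z q" unfolding rowT_def using t th by (intro exI[of _ t]) auto
    then show ?thesis by blast
  next
    case False
    then have st: "strict S z y" using yZ z c(2) not_R_strict by blast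
    obtain e where e: "e > 0" "\<forall>w\<in>Zset. dist w y < e \<longrightarrow> strict S z w"
      using open_below[OF c(2) z st] by blast
    define t where "t = th - min (e/2) (th/2)"
    have t: "0 < t" "t < th" unfolding t_def using e th(1,2) by (auto simp: min_def field_simps)
    have tZ: "(t,q) \<in> Zset" using t th q q1 by auto
    have "dist (t,q) y < e" unfolding y_def dist_col dist_real_def t_def using e th(1,2) by (auto simp: min_def abs_if)
    then have "strict S z (t,q)" using e tZ by auto
    moreover have "strict R (t,q) z"
      using strict_trans1[OF c(1) cl_tmono[OF c(1) tZ _ t(2)]] th q q1 unfolding indiff_def by auto
    ultimately have "rowT R S z q" unfolding rowT_def using t th by (intro exI[of _ t]) auto
    then show ?thesis by blast
  qed
qed

lemma row_disj:
  assumes c: "classical R" "classical S" and z: "z \<in> Zset" and q: "0 \<le> q" "q \<le> 1"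
  shows "\<not> (rowT R S z q \<and> rowT S R z q)"
proof
  assume "rowT R S z q \<and> rowT S R z q"
  then obtain a b where a: "0 \<le> a" "strict R (a,q) z" "strict S z (a,q)"
    and b: "0 \<le> b" "strict S (b,q) z" "strict R z (b,q)" unfolding rowT_def by blast
  consider "a < b" | "a = b" | "b < a" by linarith
  then show False
  proof cases
    case 1
    have "strict S (a,q) (b,q)" using cl_tmono[OF c(2) _ _ 1] a b q by auto
    then show False using a b unfolding strict_def by (meson c(2) cl_trans)
  next
    case 2 then show False using a b unfolding strict_def by auto
  next
    case 3
    have "strict R (b,q) (a,q)" using cl_tmono[OF c(1) _ _ 3] a b q by auto
    then show False using a b unfolding strict_def by (meson c(1) cl_trans)
  qed
qed

lemma conn_split:
  fixes S :: "'a::metric_space set"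
  assumes cS: "connected S" and cov: "\<forall>x\<in>S. P x \<or> Q x" and dj: "\<forall>x\<in>S. \<not>(P x \<and> Q x)"
    and oP: "\<forall>x\<in>S. P x \<longrightarrow> (\<exists>e>0. \<forall>y\<in>S. dist y x < e \<longrightarrow> P y)"
    and oQ: "\<forall>x\<in>S. Q x \<longrightarrow> (\<exists>e>0. \<forall>y\<in>S. dist y x < e \<longrightarrow> Q y)"
  shows "(\<forall>x\<in>S. P x) \<or> (\<forall>x\<in>S. Q x)"
proof -
  define A where "A = \<Union>{ball x e |x e. x\<in>S \<and> e>0 \<and> (\<forall>y\<in>S. dist y x < e \<longrightarrow> P y)}"
  define B where "B = \<Union>{ball x e |x e. x\<in>S \<and> e>0 \<and> (\<forall>y\<in>S. dist y x < e \<longrightarrow> Q y)}"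
  have oA: "open A" unfolding A_def by (intro open_Union) auto
  have oB: "open B" unfolding B_def by (intro open_Union) auto
  have AP: "\<And>y. y \<in> A \<Longrightarrow> y \<in> S \<Longrightarrow> P y" unfolding A_def by (auto simp: dist_commute)
  have BQ: "\<And>y. y \<in> B \<Longrightarrow> y \<in> S \<Longrightarrow> Q y" unfolding B_def by (auto simp: dist_commute)
  have PA: "\<And>y. y \<in> S \<Longrightarrow> P y \<Longrightarrow> y \<in> A"
  proof -
    fix y assume "y \<in> S" "P y"
    then obtain e where "e > 0" "\<forall>w\<in>S. dist w y < e \<longrightarrow> P w" using oP by blast
    then show "y \<in> A" unfolding A_def using \<open>y \<in> S\<close> by (intro UnionI[of "ball y e"]) auto
  qed
  have QB: "\<And>y. y \<in> S \<Longrightarrow> Q y \<Longrightarrow> y \<in> B"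
  proof -
    fix y assume "y \<in> S" "Q y"
    then obtain e where "e > 0" "\<forall>w\<in>S. dist w y < e \<longrightarrow> Q w" using oQ by blast
    then show "y \<in> B" unfolding B_def using \<open>y \<in> S\<close> by (intro UnionI[of "ball y e"]) auto
  qed
  have "A \<inter> B \<inter> S = {}" using AP BQ dj by blast
  moreover have "S \<subseteq> A \<union> B" using cov PA QB by blast
  ultimately have "A \<inter> S = {} \<or> B \<inter> S = {}" using connectedD[OF cS oA oB] by blast
  then show ?thesis using cov PA QB by blast
qed




lemma rowT_open:
  assumes c: "classical R" "classical S" and z: "z \<in> Zset" and r: "rowT R S z q" and q: "0 \<le> q" "q \<le> 1"
  shows "\<exists>e>0. \<forall>y. 0 \<le> y \<and> y \<le> 1 \<longrightarrow> dist y q < e \<longrightarrow> rowT R S z y"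
proof -
  obtain t where t: "0 \<le> t" "t < fst z" "strict R (t,q) z" "strict S z (t,q)" using r unfolding rowT_def by blast
  obtain e1 where e1: "e1 > 0" "\<forall>w\<in>Zset. dist w (t,q) < e1 \<longrightarrow> strict R w z" using open_above[OF c(1) z t(3)] by blast
  obtain e2 where e2: "e2 > 0" "\<forall>w\<in>Zset. dist w (t,q) < e2 \<longrightarrow> strict S z w" using open_below[OF c(2) z t(4)] by blast
  show ?thesis
  proof (intro exI[of _ "min e1 e2"] conjI allI impI)
    fix y assume y: "0 \<le> y \<and> y \<le> 1" "dist y q < min e1 e2"
    have "(t,y) \<in> Zset" using y t by auto
    moreover have "dist (t,y) (t,q) < e1" "dist (t,y) (t,q) < e2" using y by (auto simp: dist_row)
    ultimately show "rowT R S z y" unfolding rowT_def using t e1 e2 by blast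
  qed (use e1 e2 in auto)
qed

lemma rowT_Tp: "rowT R S z q \<Longrightarrow> 0 \<le> q \<Longrightarrow> q < snd z \<Longrightarrow> z \<in> Zset \<Longrightarrow> Tp R S z"
  unfolding rowT_def Tp_def lessZ_def by (cases z) force

lemma per_z:
  assumes c: "classical R" "classical S"
    and NC: "\<forall>y\<in>Zset. indiff R y z \<and> indiff S y z \<longrightarrow> y = z"
    and z: "z \<in> Zset" and fz: "0 < fst z"
  shows "\<not> (Tp R S z \<and> Tp S R z)"
proof
  assume "Tp R S z \<and> Tp S R z"
  then obtain a1 q1 a2 q2 where x1: "(a1,q1) \<in> Zset" "lessZ (a1,q1) z" "strict R (a1,q1) z" "strict S z (a1,q1)"
    and x2: "(a2,q2) \<in> Zset" "lessZ (a2,q2) z" "strict S (a2,q2) z" "strict R z (a2,q2)"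
    unfolding Tp_def by (metis prod.collapse)
  have sz1: "snd z \<le> 1" using z by (cases z) auto
  define I where "I = {min q1 q2 .. max q1 q2}"
  have Iq: "\<And>q. q \<in> I \<Longrightarrow> 0 \<le> q \<and> q < snd z \<and> q \<le> 1" unfolding I_def using x1 x2 sz1
    by (auto simp: lessZ_def)
  have "(\<forall>q\<in>I. rowT R S z q) \<or> (\<forall>q\<in>I. rowT S R z q)"
  proof (rule conn_split)
    show "connected I" unfolding I_def by simp
    show "\<forall>q\<in>I. rowT R S z q \<or> rowT S R z q"
    proof
      fix q assume qI: "q \<in> I"
      then have "q1 \<le> q \<or> q2 \<le> q" unfolding I_def by auto
      then show "rowT R S z q \<or> rowT S R z q"
      proof
        assume "q1 \<le> q"
        then have "strict R (0,q) z" using strict_trans2[OF c(1) cl_weak[OF c(1)] x1(3)] x1 Iq[OF qI] by auto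
        then show ?thesis using row1[OF c NC z fz] Iq[OF qI] by auto
      next
        assume "q2 \<le> q"
        then have "strict S (0,q) z" using strict_trans2[OF c(2) cl_weak[OF c(2)] x2(3)] x2 Iq[OF qI] by auto
        moreover have "\<forall>y\<in>Zset. indiff S y z \<and> indiff R y z \<longrightarrow> y = z" using NC by blast
        ultimately show ?thesis using row1[OF c(2,1) _ z fz] Iq[OF qI] by blast
      qed
    qed
    show "\<forall>q\<in>I. \<not> (rowT R S z q \<and> rowT S R z q)" using row_disj[OF c z] Iq by auto
    show "\<forall>q\<in>I. rowT R S z q \<longrightarrow> (\<exists>e>0. \<forall>y\<in>I. dist y q < e \<longrightarrow> rowT R S z y)"
    proof (intro ballI impI)
      fix q assume "q \<in> I" "rowT R S z q"
      then obtain e where "e > 0" "\<forall>y. 0 \<le> y \<and> y \<le> 1 \<longrightarrow> dist y q < e \<longrightarrow> rowT R S z y"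
        using rowT_open[OF c z] Iq by blast
      then show "\<exists>e>0. \<forall>y\<in>I. dist y q < e \<longrightarrow> rowT R S z y" using Iq by blast
    qed
    show "\<forall>q\<in>I. rowT S R z q \<longrightarrow> (\<exists>e>0. \<forall>y\<in>I. dist y q < e \<longrightarrow> rowT S R z y)"
    proof (intro ballI impI)
      fix q assume "q \<in> I" "rowT S R z q"
      then obtain e where "e > 0" "\<forall>y. 0 \<le> y \<and> y \<le> 1 \<longrightarrow> dist y q < e \<longrightarrow> rowT S R z y"
        using rowT_open[OF c(2,1) z] Iq by blast
      then show "\<exists>e>0. \<forall>y\<in>I. dist y q < e \<longrightarrow> rowT S R z y" using Iq by blast
    qed
  qed
  moreover have "q1 \<in> I" "q2 \<in> I" unfolding I_def by auto
  moreover have "rowT R S z q1" unfolding rowT_def using x1 by (auto simp: lessZ_def)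
  moreover have "rowT S R z q2" unfolding rowT_def using x2 by (auto simp: lessZ_def)
  ultimately show False using row_disj[OF c z] Iq by blast
qed



lemma cover:
  assumes c: "classical R" "classical S"
    and NC: "\<forall>y\<in>Zset. indiff R y z \<and> indiff S y z \<longrightarrow> y = z"
    and z: "z \<in> Zset" and fz: "0 < fst z" and sz: "0 < snd z"
  shows "Tp R S z \<or> Tp S R z"
proof -
  have sz1: "snd z \<le> 1" using z by (cases z) auto
  have "strict R (0, snd z) (fst z, snd z)" using cl_tmono[OF c(1), of 0 "snd z" "fst z"] fz sz sz1 z by auto
  then have s0: "strict R (0, snd z) z" by simp
  obtain e where e: "e > 0" "\<forall>y\<in>Zset. dist y (0, snd z) < e \<longrightarrow> strict R y z"
    using open_above[OF c(1) z s0] by blast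
  define q where "q = snd z - min (e/2) (snd z/2)"
  have q: "0 \<le> q" "q < snd z" unfolding q_def using e sz by (auto simp: min_def field_simps)
  have "dist (0,q) (0, snd z) = \<bar>q - snd z\<bar>" by (simp add: dist_Pair_Pair dist_real_def)
  also have "... < e" unfolding q_def using e sz by (auto simp: min_def abs_if)
  finally have "dist (0,q) (0, snd z) < e" .
  then have "strict R (0,q) z" using e q sz1 by auto
  then have "rowT R S z q \<or> rowT S R z q" using row1[OF c NC z fz q] by blast
  then show ?thesis using rowT_Tp q z by blast
qed

lemma Tp_open:
  assumes c: "classical R" "classical S" and z: "z \<in> Zset" and T: "Tp R S z"
  shows "\<exists>e>0. \<forall>y\<in>Zset. dist y z < e \<longrightarrow> Tp R S y"
proof -
  obtain x where x: "x \<in> Zset" "lessZ x z" "strict R x z" "strict S z x" using T unfolding Tp_def by blast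
  obtain e1 where e1: "e1 > 0" "\<forall>w\<in>Zset. dist w z < e1 \<longrightarrow> strict R x w" using open_below[OF c(1) x(1) x(3)] by blast
  obtain e2 where e2: "e2 > 0" "\<forall>w\<in>Zset. dist w z < e2 \<longrightarrow> strict S w x" using open_above[OF c(2) x(1) x(4)] by blast
  define e3 where "e3 = min (fst z - fst x) (snd z - snd x)"
  have e3: "e3 > 0" unfolding e3_def using x(2) by (auto simp: lessZ_def)
  show ?thesis
  proof (intro exI[of _ "min (min e1 e2) e3"] conjI ballI impI)
    fix y assume y: "y \<in> Zset" "dist y z < min (min e1 e2) e3"
    have "dist (fst y) (fst z) < e3" "dist (snd y) (snd z) < e3"
      using y(2) dist_fst_le[of y z] dist_snd_le[of y z] by auto
    then have "lessZ x y" unfolding lessZ_def e3_def dist_real_def by auto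
    then show "Tp R S y" unfolding Tp_def using x(1) e1 e2 y by auto
  qed (use e1 e2 e3 in auto)
qed



lemma prec_of_notTp:
  assumes c: "classical R" "classical S" and ne: "R \<noteq> S"
    and nt: "\<forall>z\<in>Zset. 0 < fst z \<longrightarrow> 0 < snd z \<longrightarrow> \<not> Tp S R z"
  shows "prec R S"
  unfolding prec_def
proof (intro conjI ne ballI subsetI)
  fix z x assume z: "z \<in> Zset" and xin: "x \<in> box z \<inter> {x. (x, z) \<in> S}"
  then have xZ: "x \<in> Zset" and xs: "(x,z) \<in> S" and xb: "x = z \<or> lessZ x z" unfolding box_def by auto
  show "x \<in> box z \<inter> {x. (x, z) \<in> R}"
  proof (cases "x = z")
    case True then show ?thesis using xin cl_refl[OF c(1) z] by auto
  next
    case False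
    then have lz: "lessZ x z" using xb by auto
    have pos: "0 < fst z" "0 < snd z" using lz xZ by (cases x, cases z, auto simp: lessZ_def)+
    show ?thesis
    proof (rule ccontr)
      assume "x \<notin> box z \<inter> {x. (x, z) \<in> R}"
      then have "(x,z) \<notin> R" using xin by auto
      then have sr: "strict R z x" using not_R_strict[OF c(1) xZ z] by auto
      show False
      proof (cases "(z,x) \<in> S")
        case False
        then have "strict S x z" using xs unfolding strict_def by auto
        then have "Tp S R z" unfolding Tp_def using xZ lz sr by auto
        then show False using nt z pos by auto
      next
        case True
        obtain e where e: "e > 0" "\<forall>w\<in>Zset. dist w x < e \<longrightarrow> strict R z w" using open_below[OF c(1) z sr] by blast
        obtain a b where ab: "x = (a,b)" by (cases x)
        define d where "d = min (e/2) ((snd z - b)/2)"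
        have d: "0 < d" "d < e" "b + d < snd z" unfolding d_def using e lz ab by (auto simp: lessZ_def min_def field_simps)
        have sz1: "snd z \<le> 1" using z by (cases z) auto
        have x'Z: "(a, b+d) \<in> Zset" using xZ ab d sz1 by auto
        have "dist (a, b+d) x < e" using ab d by (simp add: dist_row dist_real_def)
        then have "strict R z (a, b+d)" using e x'Z by auto
        moreover have "strict S (a, b+d) z"
          using strict_trans1[OF c(2) cl_qmono[OF c(2) _ x'Z, of b] xs[unfolded ab]] xZ ab d by auto
        moreover have "lessZ (a, b+d) z" using lz ab d by (auto simp: lessZ_def)
        ultimately have "Tp S R z" unfolding Tp_def using x'Z by blast
        then show False using nt z pos by auto
      qed
    qed
  qed
qed



lemma notTp_of_prec: "prec R S \<Longrightarrow> z \<in> Zset \<Longrightarrow> \<not> Tp S R z"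
proof
  assume p: "prec R S" and z: "z \<in> Zset" and "Tp S R z"
  then obtain x where x: "x \<in> Zset" "lessZ x z" "strict S x z" "strict R z x" unfolding Tp_def by blast
  have "x \<in> box z \<inter> {x. (x, z) \<in> S}" using x unfolding box_def strict_def by auto
  then have "x \<in> box z \<inter> {x. (x, z) \<in> R}" using p z unfolding prec_def by blast
  then show False using x unfolding strict_def by auto
qed

lemma NC_of_sc:
  assumes c: "classical R" "classical S" and sc: "single_crossing R S" and z: "z \<in> Zset"
  shows "\<forall>y\<in>Zset. indiff R y z \<and> indiff S y z \<longrightarrow> y = z"
proof (intro ballI impI)
  fix y assume y: "y \<in> Zset" "indiff R y z \<and> indiff S y z"
  have "z \<in> indiff_set R z \<inter> indiff_set S z" using z cl_refl[OF c(1) z] cl_refl[OF c(2) z]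
    unfolding indiff_set_def indiff_def by auto
  moreover have "y \<in> indiff_set R z \<inter> indiff_set S z" using y unfolding indiff_set_def by auto
  ultimately show "y = z" using sc z unfolding single_crossing_def by blast
qed



definition Zp :: "zbundle set" where "Zp = {0<..} \<times> {0<..1}"

lemma Zp_conn: "connected Zp" unfolding Zp_def
  by (intro connected_Times) auto

lemma Zp_mem: "z \<in> Zp \<Longrightarrow> z \<in> Zset \<and> 0 < fst z \<and> 0 < snd z"
  unfolding Zp_def by (cases z) auto

lemma total_prec:
  assumes rsc: "rich_single_crossing D" and R: "R \<in> D" and S: "S \<in> D" and ne: "R \<noteq> S"
  shows "prec R S \<or> prec S R"
proof -
  have c: "classical R" "classical S" using rsc R S unfolding rich_single_crossing_def by auto
  have sc: "single_crossing R S" "single_crossing S R" using rsc R S ne unfolding rich_single_crossing_def by auto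
  have NC: "\<And>z. z \<in> Zset \<Longrightarrow> \<forall>y\<in>Zset. indiff R y z \<and> indiff S y z \<longrightarrow> y = z"
    using NC_of_sc[OF c sc(1)] by blast
  have "(\<forall>z\<in>Zp. Tp R S z) \<or> (\<forall>z\<in>Zp. Tp S R z)"
  proof (rule conn_split[OF Zp_conn])
    show "\<forall>z\<in>Zp. Tp R S z \<or> Tp S R z" using cover[OF c NC] Zp_mem by blast
    show "\<forall>z\<in>Zp. \<not> (Tp R S z \<and> Tp S R z)" using per_z[OF c NC] Zp_mem by blast
    show "\<forall>z\<in>Zp. Tp R S z \<longrightarrow> (\<exists>e>0. \<forall>y\<in>Zp. dist y z < e \<longrightarrow> Tp R S y)"
    proof (intro ballI impI)
      fix z assume "z \<in> Zp" "Tp R S z"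
      then obtain e where "e > 0" "\<forall>y\<in>Zset. dist y z < e \<longrightarrow> Tp R S y" using Tp_open[OF c] Zp_mem by blast
      then show "\<exists>e>0. \<forall>y\<in>Zp. dist y z < e \<longrightarrow> Tp R S y" using Zp_mem by blast
    qed
    show "\<forall>z\<in>Zp. Tp S R z \<longrightarrow> (\<exists>e>0. \<forall>y\<in>Zp. dist y z < e \<longrightarrow> Tp S R y)"
    proof (intro ballI impI)
      fix z assume "z \<in> Zp" "Tp S R z"
      then obtain e where "e > 0" "\<forall>y\<in>Zset. dist y z < e \<longrightarrow> Tp S R y" using Tp_open[OF c(2,1)] Zp_mem by blast
      then show "\<exists>e>0. \<forall>y\<in>Zp. dist y z < e \<longrightarrow> Tp S R y" using Zp_mem by blast
    qed
  qed
  moreover have "\<And>z. z \<in> Zset \<Longrightarrow> 0 < fst z \<Longrightarrow> 0 < snd z \<Longrightarrow> z \<in> Zp"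
    unfolding Zp_def by (case_tac z) auto
  ultimately have "(\<forall>z\<in>Zset. 0 < fst z \<longrightarrow> 0 < snd z \<longrightarrow> \<not> Tp S R z) \<or>
                   (\<forall>z\<in>Zset. 0 < fst z \<longrightarrow> 0 < snd z \<longrightarrow> \<not> Tp R S z)"
    using per_z[OF c NC] by blast
  then show ?thesis using prec_of_notTp[OF c ne] prec_of_notTp[OF c(2,1) ne[symmetric]] by blast
qed

lemma antisym_prec:
  assumes rsc: "rich_single_crossing D" and R: "R \<in> D" and S: "S \<in> D"
  shows "\<not> (prec R S \<and> prec S R)"
proof
  assume p: "prec R S \<and> prec S R"
  then have ne: "R \<noteq> S" unfolding prec_def by auto
  have c: "classical R" "classical S" using rsc R S unfolding rich_single_crossing_def by auto
  have sc: "single_crossing R S" using rsc R S ne unfolding rich_single_crossing_def by auto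
  have z: "(1, 1/2) \<in> Zset" by simp
  have "Tp R S (1,1/2) \<or> Tp S R (1,1/2)" using cover[OF c NC_of_sc[OF c sc z] z] by simp
  then show False using notTp_of_prec p z by blast
qed

lemma trans_prec:
  assumes rsc: "rich_single_crossing D" and R: "R \<in> D" and S: "S \<in> D" and T: "T \<in> D"
    and p: "prec R S" "prec S T"
  shows "prec R T"
proof -
  have "R \<noteq> T" using antisym_prec[OF rsc R S] p by auto
  then show ?thesis using p unfolding prec_def by blast
qed




lemma rich_ex: "rich_single_crossing D \<Longrightarrow> (t1,q1) \<in> Zset \<Longrightarrow> (t2,q2) \<in> Zset \<Longrightarrow> t1 < t2 \<Longrightarrow> q1 < q2
   \<Longrightarrow> \<exists>R\<in>D. indiff R (t1,q1) (t2,q2)"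
  unfolding rich_single_crossing_def by blast

lemma prec_sub: "prec A B \<Longrightarrow> z \<in> Zset \<Longrightarrow> x \<in> box z \<Longrightarrow> (x,z) \<in> B \<Longrightarrow> (x,z) \<in> A"
  unfolding prec_def by blast

lemma no_max:
  assumes rsc: "rich_single_crossing D" and R0: "R0 \<in> D"
  shows "\<exists>L\<in>D. L \<noteq> R0 \<and> \<not> prec L R0"
proof -
  have c: "classical R0" using rsc R0 unfolding rich_single_crossing_def by auto
  define z where "z = ((1::real), (1/2::real))"
  have zZ: "z \<in> Zset" unfolding z_def by simp
  have "strict R0 (1/2, 1/2) z" unfolding z_def using cl_tmono[OF c, of "1/2" "1/2" 1] by simp
  then obtain e where e: "e > 0" "\<forall>y\<in>Zset. dist y (1/2,1/2) < e \<longrightarrow> strict R0 y z"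
    using open_above[OF c zZ] by blast
  define d where "d = min (e/2) (1/4::real)"
  have d: "0 < d" "d < e" "d \<le> 1/4" unfolding d_def using e by (auto simp: min_def)
  define x where "x = ((1/2::real), 1/2 - d)"
  have xZ: "x \<in> Zset" unfolding x_def using d by auto
  have "dist x (1/2,1/2) = \<bar>(1/2 - d) - 1/2\<bar>" unfolding x_def by (simp add: dist_Pair_Pair dist_real_def)
  then have "dist x (1/2,1/2) < e" using d by auto
  then have xR: "(x,z) \<in> R0" using e xZ unfolding strict_def by auto
  have "((1/4::real), 1/2 - d) \<in> Zset" "((1::real), (1/2::real)) \<in> Zset" "(1/4::real) < 1" "1/2 - d < (1/2::real)"
    using d by auto
  then obtain L where L: "L \<in> D" "indiff L (1/4, 1/2 - d) (1, 1/2)"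
    using rich_ex[OF rsc] by blast
  have cL: "classical L" using rsc L unfolding rich_single_crossing_def by auto
  have "strict L (1/4, 1/2 - d) x" unfolding x_def using cl_tmono[OF cL, of "1/4" "1/2 - d" "1/2"] d by auto
  then have xL: "(x,z) \<notin> L" using L(2) cl_trans[OF cL] unfolding strict_def indiff_def z_def by blast
  have xb: "x \<in> box z" unfolding box_def x_def z_def lessZ_def using xZ d unfolding x_def by auto
  show ?thesis
  proof (intro bexI[OF _ L(1)] conjI)
    show "L \<noteq> R0" using xR xL by auto
    show "\<not> prec L R0" using xR xL xb zZ prec_sub by blast
  qed
qed

lemma no_min:
  assumes rsc: "rich_single_crossing D" and R0: "R0 \<in> D"
  shows "\<exists>L\<in>D. L \<noteq> R0 \<and> \<not> prec R0 L"
proof -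
  have c: "classical R0" using rsc R0 unfolding rich_single_crossing_def by auto
  define z where "z = ((1::real), (1/2::real))"
  have zZ: "z \<in> Zset" unfolding z_def by simp
  have "strict R0 z (1, 1/4)" unfolding z_def using cl_qmono[OF c, of 1 "1/4" "1/2"] by simp
  then obtain e where e: "e > 0" "\<forall>y\<in>Zset. dist y (1,1/4) < e \<longrightarrow> strict R0 z y"
    using open_below[OF c zZ] by blast
  define d where "d = min (e/2) (1/2::real)"
  have d: "0 < d" "d < e" "d \<le> 1/2" unfolding d_def using e by (auto simp: min_def)
  define x where "x = (1 - d, (1/4::real))"
  have xZ: "x \<in> Zset" unfolding x_def using d by auto
  have "dist x (1,1/4) = \<bar>(1 - d) - 1\<bar>" unfolding x_def by (simp add: dist_Pair_Pair dist_real_def)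
  then have "dist x (1,1/4) < e" using d by auto
  then have xR: "(x,z) \<notin> R0" using e xZ unfolding strict_def by auto
  have "(1 - d, (1/4::real)) \<in> Zset" "((1::real), (1/2::real)) \<in> Zset" "1 - d < 1" "(1/4::real) < 1/2"
    using d by auto
  then obtain L where L: "L \<in> D" "indiff L x z"
    using rich_ex[OF rsc] unfolding x_def z_def by blast
  then have xL: "(x,z) \<in> L" unfolding indiff_def by auto
  have xb: "x \<in> box z" unfolding box_def x_def z_def lessZ_def using xZ d unfolding x_def by auto
  show ?thesis
  proof (intro bexI[OF _ L(1)] conjI)
    show "L \<noteq> R0" using xR xL by auto
    show "\<not> prec R0 L" using xR xL xb zZ prec_sub by blast
  qed
qed




definition nb :: "pref set \<Rightarrow> pref \<Rightarrow> pref set \<Rightarrow> bool" where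
  "nb D R0 T \<longleftrightarrow> (\<exists>As Bs. finite As \<and> finite Bs \<and> (\<forall>a\<in>As. a \<in> D \<and> prec a R0) \<and> (\<forall>b\<in>Bs. b \<in> D \<and> prec R0 b)
          \<and> {R \<in> D. (\<forall>a\<in>As. prec a R) \<and> (\<forall>b\<in>Bs. prec R b)} \<subseteq> T)"

lemma nb_Int: assumes "nb D R0 a" "nb D R0 b" shows "nb D R0 (a \<inter> b)"
proof -
  obtain A1 B1 where
    1: "finite A1" "finite B1" "\<forall>a\<in>A1. a \<in> D \<and> prec a R0" "\<forall>b\<in>B1. b \<in> D \<and> prec R0 b"
       "{R \<in> D. (\<forall>a\<in>A1. prec a R) \<and> (\<forall>b\<in>B1. prec R b)} \<subseteq> a" using assms(1) unfolding nb_def by auto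
  obtain A2 B2 where
    2: "finite A2" "finite B2" "\<forall>a\<in>A2. a \<in> D \<and> prec a R0" "\<forall>b\<in>B2. b \<in> D \<and> prec R0 b"
       "{R \<in> D. (\<forall>a\<in>A2. prec a R) \<and> (\<forall>b\<in>B2. prec R b)} \<subseteq> b" using assms(2) unfolding nb_def by auto
  have "{R \<in> D. (\<forall>a\<in>A1 \<union> A2. prec a R) \<and> (\<forall>b\<in>B1 \<union> B2. prec R b)} \<subseteq> a \<inter> b"
    using 1(5) 2(5) by auto
  then show ?thesis unfolding nb_def using 1 2
    by (intro exI[of _ "A1 \<union> A2"] exI[of _ "B1 \<union> B2"]) auto
qed

lemma nb_mono: "nb D R0 a \<Longrightarrow> a \<subseteq> b \<Longrightarrow> nb D R0 b"
  unfolding nb_def by (meson order_trans)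

lemma nbhd:
  assumes g: "generate_topology_on (insert D ({{R \<in> D. prec R A} | A. A \<in> D} \<union> {{R \<in> D. prec A R} | A. A \<in> D})) T"
  shows "R0 \<in> T \<Longrightarrow> nb D R0 T"
  using g
proof (induction rule: generate_topology_on.induct)
  case Empty then show ?case by simp
next
  case (Int a b)
  then show ?case using nb_Int by auto
next
  case (UN K)
  then obtain k where k: "k \<in> K" "R0 \<in> k" by auto
  then have "nb D R0 k" using UN.IH by auto
  then show ?case using nb_mono k by (meson Union_upper)
next
  case (Basis s)
  have "s = D \<or> (\<exists>A. A \<in> D \<and> s = {R \<in> D. prec R A}) \<or> (\<exists>A. A \<in> D \<and> s = {R \<in> D. prec A R})"
    using Basis(1) by auto
  then show ?case
  proof (elim disjE exE conjE)
    assume "s = D" then show ?thesis unfolding nb_def by (intro exI[of _ "{}"]) auto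
  next
    fix A assume "A \<in> D" "s = {R \<in> D. prec R A}"
    then show ?thesis using Basis(2) unfolding nb_def by (intro exI[of _ "{}"] exI[of _ "{A}"]) auto
  next
    fix A assume "A \<in> D" "s = {R \<in> D. prec A R}"
    then show ?thesis using Basis(2) unfolding nb_def by (intro exI[of _ "{A}"] exI[of _ "{}"]) auto
  qed
qed

lemma prec_irrefl: "\<not> prec R R" unfolding prec_def by auto



lemma inf_upper:
  assumes rsc: "rich_single_crossing D" and U: "U \<subseteq> D" and inf: "is_inf_prec D U R0" and nU: "R0 \<notin> U"
    and Bs: "finite Bs" "\<forall>b\<in>Bs. b \<in> D \<and> prec R0 b"
  shows "\<exists>R\<in>U. \<forall>b\<in>Bs. prec R b"
  using Bs
proof (induction Bs rule: finite_induct)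
  case empty
  have R0: "R0 \<in> D" using inf unfolding is_inf_prec_def by auto
  show ?case
  proof (rule ccontr)
    assume "\<not> ?case"
    then have "U = {}" by auto
    then have "\<forall>L\<in>D. L = R0 \<or> prec L R0" using inf unfolding is_inf_prec_def by auto
    then show False using no_max[OF rsc R0] by blast
  qed
next
  case (insert b Bs)
  then obtain R1 where R1: "R1 \<in> U" "\<forall>b\<in>Bs. prec R1 b" by auto
  have b: "b \<in> D" "prec R0 b" using insert by auto
  have R0: "R0 \<in> D" using inf unfolding is_inf_prec_def by auto
  obtain R2 where R2: "R2 \<in> U" "prec R2 b"
  proof (rule ccontr)
    assume "\<not> thesis"
    then have nb: "\<forall>R\<in>U. \<not> prec R b" using that by blast
    have "\<forall>R\<in>U. b = R \<or> prec b R" using total_prec[OF rsc b(1)] U nb by blast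
    then have "b = R0 \<or> prec b R0" using inf b unfolding is_inf_prec_def by blast
    then show False using b prec_irrefl antisym_prec[OF rsc b(1) R0] by blast
  qed
  show ?case
  proof (cases "R1 = R2")
    case True then show ?thesis using R1 R2 by auto
  next
    case False
    then have "prec R1 R2 \<or> prec R2 R1" using total_prec[OF rsc] R1 R2 U by blast
    then show ?thesis
    proof
      assume "prec R1 R2"
      then have "prec R1 b" using trans_prec[OF rsc _ _ b(1)] R1 R2 U by blast
      then show ?thesis using R1 by auto
    next
      assume p: "prec R2 R1"
      have "\<forall>b'\<in>Bs. prec R2 b'" using trans_prec[OF rsc _ _ _ p] R1 R2 U insert.prems by blast
      then show ?thesis using R2 by auto
    qed
  qed
qed

lemma sup_lower:
  assumes rsc: "rich_single_crossing D" and U: "U \<subseteq> D" and sup: "is_sup_prec D U R0" and nU: "R0 \<notin> U"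
    and As: "finite As" "\<forall>a\<in>As. a \<in> D \<and> prec a R0"
  shows "\<exists>R\<in>U. \<forall>a\<in>As. prec a R"
  using As
proof (induction As rule: finite_induct)
  case empty
  have R0: "R0 \<in> D" using sup unfolding is_sup_prec_def by auto
  show ?case
  proof (rule ccontr)
    assume "\<not> ?case"
    then have "U = {}" by auto
    then have "\<forall>M\<in>D. R0 = M \<or> prec R0 M" using sup unfolding is_sup_prec_def by auto
    then show False using no_min[OF rsc R0] by blast
  qed
next
  case (insert a As)
  then obtain R1 where R1: "R1 \<in> U" "\<forall>a\<in>As. prec a R1" by auto
  have a: "a \<in> D" "prec a R0" using insert by auto
  have R0: "R0 \<in> D" using sup unfolding is_sup_prec_def by auto
  obtain R2 where R2: "R2 \<in> U" "prec a R2"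
  proof (rule ccontr)
    assume "\<not> thesis"
    then have nb: "\<forall>R\<in>U. \<not> prec a R" using that by blast
    have "\<forall>R\<in>U. R = a \<or> prec R a" using total_prec[OF rsc _ a(1)] U nb by blast
    then have "R0 = a \<or> prec R0 a" using sup a unfolding is_sup_prec_def by blast
    then show False using a prec_irrefl antisym_prec[OF rsc a(1) R0] by blast
  qed
  show ?case
  proof (cases "R1 = R2")
    case True then show ?thesis using R1 R2 by auto
  next
    case False
    then have "prec R1 R2 \<or> prec R2 R1" using total_prec[OF rsc] R1 R2 U by blast
    then show ?thesis
    proof
      assume p: "prec R1 R2"
      have "\<forall>a'\<in>As. prec a' R2" using trans_prec[OF rsc _ _ _ _ p] R1 R2 U insert.prems by blast
      then show ?thesis using R2 by auto
    next
      assume "prec R2 R1"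
      then have "prec a R1" using trans_prec[OF rsc a(1)] R1 R2 U by blast
      then show ?thesis using R1 by auto
    qed
  qed
qed



lemma top_D: "R0 \<in> D \<Longrightarrow> R0 \<in> topspace (order_top D)"
  unfolding order_top_def
  using openin_subset[OF topology_generated_by_Basis[of D]] by blast

theorem mainTheorem2:
  fixes D U :: "pref set"
  assumes "rich_single_crossing D" and "U \<subseteq> D"
  shows "(\<forall>R0. is_inf_prec D U R0 \<longrightarrow> R0 \<in> order_top D closure_of U) \<and>
         (\<forall>R0. is_sup_prec D U R0 \<longrightarrow> R0 \<in> order_top D closure_of U)"
proof (intro conjI allI impI)
  fix R0 assume inf: "is_inf_prec D U R0"
  have R0: "R0 \<in> D" using inf unfolding is_inf_prec_def by auto
  show "R0 \<in> order_top D closure_of U"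
    unfolding in_closure_of
  proof (intro conjI allI impI top_D[OF R0])
    fix T assume T: "R0 \<in> T \<and> openin (order_top D) T"
    then obtain As Bs where ab: "finite As" "finite Bs" "\<forall>a\<in>As. a \<in> D \<and> prec a R0" "\<forall>b\<in>Bs. b \<in> D \<and> prec R0 b"
          "{R \<in> D. (\<forall>a\<in>As. prec a R) \<and> (\<forall>b\<in>Bs. prec R b)} \<subseteq> T"
    proof -
      have g: "generate_topology_on (insert D ({{R \<in> D. prec R A} | A. A \<in> D} \<union> {{R \<in> D. prec A R} | A. A \<in> D})) T"
        using T openin_topology_generated_by unfolding order_top_def by auto
      have "nb D R0 T" using nbhd[OF g] T by auto
      then show ?thesis using that unfolding nb_def by auto
    qed
    show "\<exists>y. y \<in> U \<and> y \<in> T"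
    proof (cases "R0 \<in> U")
      case True then show ?thesis using T by auto
    next
      case False
      obtain R where R: "R \<in> U" "\<forall>b\<in>Bs. prec R b" using inf_upper[OF assms inf False ab(2,4)] by blast
      have "prec R0 R" using inf R False unfolding is_inf_prec_def by auto
      then have "\<forall>a\<in>As. prec a R" using trans_prec[OF assms(1) _ R0] ab(3) R assms(2) by blast
      then show ?thesis using R ab(5) assms(2) by blast
    qed
  qed
next
  fix R0 assume sup: "is_sup_prec D U R0"
  have R0: "R0 \<in> D" using sup unfolding is_sup_prec_def by auto
  show "R0 \<in> order_top D closure_of U"
    unfolding in_closure_of
  proof (intro conjI allI impI top_D[OF R0])
    fix T assume T: "R0 \<in> T \<and> openin (order_top D) T"
    then obtain As Bs where ab: "finite As" "finite Bs" "\<forall>a\<in>As. a \<in> D \<and> prec a R0" "\<forall>b\<in>Bs. b \<in> D \<and> prec R0 b"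
          "{R \<in> D. (\<forall>a\<in>As. prec a R) \<and> (\<forall>b\<in>Bs. prec R b)} \<subseteq> T"
    proof -
      have g: "generate_topology_on (insert D ({{R \<in> D. prec R A} | A. A \<in> D} \<union> {{R \<in> D. prec A R} | A. A \<in> D})) T"
        using T openin_topology_generated_by unfolding order_top_def by auto
      have "nb D R0 T" using nbhd[OF g] T by auto
      then show ?thesis using that unfolding nb_def by auto
    qed
    show "\<exists>y. y \<in> U \<and> y \<in> T"
    proof (cases "R0 \<in> U")
      case True then show ?thesis using T by auto
    next
      case False
      obtain R where R: "R \<in> U" "\<forall>a\<in>As. prec a R" using sup_lower[OF assms sup False ab(1,3)] by blast
      have "prec R R0" using sup R False unfolding is_sup_prec_def by auto
      then have "\<forall>b\<in>Bs. prec R b" using trans_prec[OF assms(1) _ R0] ab(4) R assms(2) by blast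
      then show ?thesis using R ab(5) assms(2) by blast
    qed
  qed
qed


end
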